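(* Let $G$ be a finite interdependent game and consider the unperturbed process $P^0$ on the state space $X=\prod_{i\in N}(S_i\times\{C,D\})$ described in the context. A state $x=(x_1,\dots,x_n)\in X$ belongs to a recurrent class of $P^0$ if and only if either (Form 1) $x_i=[s_i^b,C]$ for every $i\in N$ (with $s_i^b\in S_i$), in which case the singleton $\{x\}$ is a recurrent class (the set of such states is denoted $C^0$); or (Form 2) $x_i=[s_i^b,D]$ for every $i\in N$, and all states of this form together constitute a single recurrent class, denoted $D^0$.
   Context: Game: agents $N=\{1,\dots,n\}$, finite action sets $\mathcal{A}_i$, $\mathcal{A}=\prod_i\mathcal{A}_i$, utilities $U_i:\mathcal{A}\to[0,1]$. Interdependent: for every $a\in\mathcal{A}$ and proper subset $J\subsetneq N$ there exist $i\notin J$ and $a'_J\in\prod_{j\in J}\mathcal{A}_j$ with $U_i(a'_J,a_{-J})\neq U_i(a_J,a_{-J})$. Strategies: for a fixed integer $\Omega\ge1$, $S_i=\bigcup_{\omega=1}^\Omega\mathcal{A}_i^\omega$; $s_i=(a_i^1,\dots,a_i^\omega)$ is the map $[0,1]\to\mathcal{A}_i$ sending $z\in[(k-1)/\omega,k/\omega)$ to $a_i^k$ ($k<\omega$) and $z\in[(\omega-1)/\omega,1]$ to $a_i^\omega$. For $s\in S=\prod_iS_i$, $q^a(s)=\int_0^1\prod_i I\{s_i(z)=a_i\}dz$ and $U_i(s):=\sum_a U_i(a)q^a(s)$. Learning process (states observed once per period): each agent has state $x_i=[s_i^b,m_i]$, $m_i\in\{C,D\}$. In a period, all play baseline $s^b$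 (evaluation), then trial strategies $s^t$, then acceptance strategies $s^a$, with phase utilities $u_i^b,u_i^t,u_i^a$. The unperturbed process $P^0$ is the version in which: every phase utility equals the exact expected utility of the joint strategy played in that phase ($u_i^b=U_i(s^b)$, $u_i^t=U_i(s^t)$, $u_i^a=U_i(s^a)$); a content agent always chooses $s_i^t=s_i^b$; a discontent agent chooses $s_i^t$ uniformly at random from $S_i$, independently of others; a content agent's acceptance strategy is $s_i^a=s_i^t$ if $u_i^t>u_i^b$ and $s_i^b$ otherwise (so here $s_i^a=s_i^b$); a discontent agent uses $s_i^a=s_i^t$. State update: a content agent that did not experiment keeps $[s_i^b,C]$ if $u_i^a\ge u_i^b$ and becomes $[s_i^b,D]$ if $u_i^a<u_i^b$; a discontent agent moves to $[s_i^a,D]$ (it never becomes content). *)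

theory Defs
  imports "HOL-Analysis.Analysis"
begin

datatype mood = Content | Discontent

definition profiles :: "('n \<Rightarrow> 'a set) \<Rightarrow> ('n \<Rightarrow> 'a) set" where
  "profiles A = {a. \<forall>i. a i \<in> A i}"

definition interdependent :: "('n \<Rightarrow> 'a set) \<Rightarrow> ('n \<Rightarrow> ('n \<Rightarrow> 'a) \<Rightarrow> real) \<Rightarrow> bool" where
  "interdependent A U \<longleftrightarrow>
     (\<forall>a \<in> profiles A. \<forall>J. J \<noteq> {} \<and> J \<noteq> UNIV \<longrightarrow>
        (\<exists>i. i \<notin> J \<and> (\<exists>a'. (\<forall>j\<in>J. a' j \<in> A j) \<and>
            U i (\<lambda>j. if j \<in> J then a' j else a j) \<noteq> U i a)))"

definition strategies :: "('n \<Rightarrow> 'a set) \<Rightarrow> nat \<Rightarrow> 'n \<Rightarrow> 'a list set" where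
  "strategies A \<Omega> i = {s. 1 \<le> length s \<and> length s \<le> \<Omega> \<and> set s \<subseteq> A i}"

text \<open>A strategy (a^1,...,a^w) as a map [0,1] -> A_i: z in [(k-1)/w, k/w) goes to a^k (k<w),
  z in [(w-1)/w,1] goes to a^w (0-based index below).\<close>
definition strat_eval :: "'a list \<Rightarrow> real \<Rightarrow> 'a" where
  "strat_eval s z = s ! min (nat \<lfloor>z * real (length s)\<rfloor>) (length s - 1)"

definition qprob :: "('n::finite \<Rightarrow> 'a) \<Rightarrow> ('n \<Rightarrow> 'a list) \<Rightarrow> real" where
  "qprob a s = integral {0..1} (\<lambda>z. \<Prod>i\<in>UNIV. if strat_eval (s i) z = a i then 1 else 0)"

definition strat_util ::
  "('n::finite \<Rightarrow> 'a set) \<Rightarrow> ('n \<Rightarrow> ('n \<Rightarrow> 'a) \<Rightarrow> real) \<Rightarrow> 'n \<Rightarrow> ('n \<Rightarrow> 'a list) \<Rightarrow> real" where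
  "strat_util A U i s = (\<Sum>a\<in>profiles A. U i a * qprob a s)"

definition states :: "('n \<Rightarrow> 'a set) \<Rightarrow> nat \<Rightarrow> ('n \<Rightarrow> 'a list \<times> mood) set" where
  "states A \<Omega> = {x. \<forall>i. fst (x i) \<in> strategies A \<Omega> i}"

text \<open>One period of the unperturbed process, given the trial draws t (t i is agent i's
  uniformly drawn trial strategy; it is used only if i is discontent).\<close>
definition step0 ::
  "('n::finite \<Rightarrow> 'a set) \<Rightarrow> ('n \<Rightarrow> ('n \<Rightarrow> 'a) \<Rightarrow> real) \<Rightarrow>
   ('n \<Rightarrow> 'a list \<times> mood) \<Rightarrow> ('n \<Rightarrow> 'a list) \<Rightarrow> ('n \<Rightarrow> 'a list \<times> mood)" where
  "step0 A U x t = (\<lambda>i.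
     let sb = (\<lambda>j. fst (x j));
         sa = (\<lambda>j. if snd (x j) = Content then fst (x j) else t j)
     in if snd (x i) = Content
        then (if strat_util A U i sa \<ge> strat_util A U i sb then (fst (x i), Content)
              else (fst (x i), Discontent))
        else (t i, Discontent))"

definition P0 ::
  "('n::finite \<Rightarrow> 'a set) \<Rightarrow> ('n \<Rightarrow> ('n \<Rightarrow> 'a) \<Rightarrow> real) \<Rightarrow> nat \<Rightarrow>
   ('n \<Rightarrow> 'a list \<times> mood) \<Rightarrow> ('n \<Rightarrow> 'a list \<times> mood) \<Rightarrow> real" where
  "P0 A U \<Omega> x y =
     real (card {t \<in> Pi\<^sub>E UNIV (strategies A \<Omega>). step0 A U x t = y})
     / real (card (Pi\<^sub>E UNIV (strategies A \<Omega>)))"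

definition accessible ::
  "('n::finite \<Rightarrow> 'a set) \<Rightarrow> ('n \<Rightarrow> ('n \<Rightarrow> 'a) \<Rightarrow> real) \<Rightarrow> nat \<Rightarrow>
   ('n \<Rightarrow> 'a list \<times> mood) \<Rightarrow> ('n \<Rightarrow> 'a list \<times> mood) \<Rightarrow> bool" where
  "accessible A U \<Omega> x y \<longleftrightarrow>
     (x, y) \<in> {(u, v). u \<in> states A \<Omega> \<and> v \<in> states A \<Omega> \<and> P0 A U \<Omega> u v > 0}\<^sup>*"

text \<open>Recurrent class of a finite Markov chain: a nonempty closed communicating class,
  i.e. a nonempty set R of states such that from every x in R exactly R is accessible.\<close>
definition recurrent_class ::
  "('n::finite \<Rightarrow> 'a set) \<Rightarrow> ('n \<Rightarrow> ('n \<Rightarrow> 'a) \<Rightarrow> real) \<Rightarrow> nat \<Rightarrow>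
   ('n \<Rightarrow> 'a list \<times> mood) set \<Rightarrow> bool" where
  "recurrent_class A U \<Omega> R \<longleftrightarrow> R \<noteq> {} \<and> R \<subseteq> states A \<Omega> \<and>
     (\<forall>x\<in>R. {y. accessible A U \<Omega> x y} = R)"

end

theory Submission
  imports Defs
begin
lemma ind_meas: "(\<lambda>z. if strat_eval s z = b then 1 else (0::real)) \<in> borel_measurable borel"
proof -
  have e: "(\<lambda>z. if strat_eval s z = b then 1 else (0::real)) = (\<lambda>k. if s ! min (nat k) (length s - 1) = b then 1 else (0::real)) \<circ> (\<lambda>z. floor (z * real (length s)))"
    by (auto simp: strat_eval_def fun_eq_iff)
  have m1: "(\<lambda>z. floor (z * real (length s))) \<in> measurable borel (count_space UNIV)"
    by measurable
  show ?thesis unfolding e by (rule measurable_comp[OF m1]) simp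
qed

lemma prod_meas: "(\<lambda>z. \<Prod>i\<in>UNIV. if strat_eval (s i) z = a i then 1 else (0::real)) \<in> borel_measurable borel"
  by (rule borel_measurable_prod) (rule ind_meas)

lemma integ: "(\<lambda>z. \<Prod>i\<in>(UNIV::'n::finite set). if strat_eval (s i) z = a i then 1 else (0::real)) integrable_on {0..1}"
proof (rule measurable_bounded_by_integrable_imp_integrable[where g="\<lambda>_. 1"])
  show "(\<lambda>z. \<Prod>i\<in>(UNIV::'n set). if strat_eval (s i) z = a i then 1 else (0::real)) \<in> borel_measurable (lebesgue_on {0..1})"
    using measurable_comp[OF id_borel_measurable_lebesgue_on prod_meas] by (simp add: comp_def)
qed (auto simp: abs_prod intro!: prod_le_1)

lemma prod_ind: "(\<Prod>i\<in>(UNIV::'n::finite set). if P i then 1 else (0::real)) = (if \<forall>i. P i then 1 else 0)"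
proof (cases "\<forall>i. P i")
  case True then show ?thesis by simp
next
  case False
  then obtain j where "\<not> P j" by blast
  then have "(\<Prod>i\<in>(UNIV::'n set). if P i then 1 else (0::real)) = 0"
    by (intro prod_zero) auto
  then show ?thesis using False by simp
qed

lemma qdiff:
  fixes s s' :: "'n::finite \<Rightarrow> 'a list" and \<Omega> :: nat
  assumes Om: "\<Omega> \<ge> 1"
    and lo: "\<And>z i. 0 \<le> z \<Longrightarrow> z < 1 / real \<Omega> \<Longrightarrow> strat_eval (s i) z = p i \<and> strat_eval (s' i) z = p' i"
    and hi: "\<And>z i. 1 / real \<Omega> \<le> z \<Longrightarrow> z < 1 \<Longrightarrow> strat_eval (s i) z = strat_eval (s' i) z"
  shows "qprob b s - qprob b s' = (1 / real \<Omega>) * ((if p = b then 1 else 0) - (if p' = b then 1 else 0))"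
proof -
  define f where "f = (\<lambda>z. \<Prod>i\<in>(UNIV::'n set). if strat_eval (s i) z = b i then 1 else (0::real))"
  define f' where "f' = (\<lambda>z. \<Prod>i\<in>(UNIV::'n set). if strat_eval (s' i) z = b i then 1 else (0::real))"
  define d where "d = (if p = b then 1 else 0) - (if p' = b then 1 else (0::real))"
  define c where "c = 1 / real \<Omega>"
  have c01: "0 \<le> c" "c \<le> 1" using Om by (auto simp: c_def)
  have fi: "f integrable_on {0..1}" "f' integrable_on {0..1}" unfolding f_def f'_def by (rule integ)+
  have "qprob b s - qprob b s' = integral {0..1} (\<lambda>z. f z - f' z)"
    using integral_diff[OF fi] by (simp add: qprob_def f_def f'_def)
  also have "\<dots> = integral {0..c} (\<lambda>z. f z - f' z) + integral {c..1} (\<lambda>z. f z - f' z)"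
    using Henstock_Kurzweil_Integration.integral_combine[OF c01 integrable_diff[OF fi]] by simp
  also have "integral {c..1} (\<lambda>z. f z - f' z) = integral {c..1} (\<lambda>z. 0)"
    by (rule integral_spike[of "{1}"]) (use hi in \<open>auto simp: f_def f'_def c_def\<close>)
  also have "integral {0..c} (\<lambda>z. f z - f' z) = integral {0..c} (\<lambda>z. d)"
  proof (rule integral_spike[of "{c}"])
    fix z assume z: "z \<in> {0..c} - {c}"
    then have "0 \<le> z" "z < 1 / real \<Omega>" by (auto simp: c_def)
    from lo[OF this] show "d = f z - f' z"
      by (simp add: f_def f'_def d_def prod_ind fun_eq_iff eq_commute)
  qed simp
  finally show ?thesis using c01 by (simp add: d_def c_def)
qed

lemma se_lo: assumes "s \<noteq> []" "length s \<le> \<Omega>" "0 \<le> z" "z < 1 / real \<Omega>"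
  shows "strat_eval s z = hd s"
proof -
  have "z * real (length s) < 1"
  proof -
    have "z * real (length s) \<le> z * real \<Omega>" using assms by (intro mult_left_mono) auto
    also have "\<dots> < 1"
    proof -
      have "real \<Omega> > 0" using assms by (cases s) auto
      then show ?thesis using assms(4) by (simp add: less_divide_eq)
    qed
    finally show ?thesis .
  qed
  moreover have "0 \<le> z * real (length s)" using assms by simp
  ultimately have "\<lfloor>z * real (length s)\<rfloor> = 0" by (simp add: floor_eq_iff)
  then show ?thesis using assms by (simp add: strat_eval_def hd_conv_nth)
qed

lemma se_hi: assumes "\<Omega> \<ge> 1" "1 / real \<Omega> \<le> z" "z < 1"
  shows "strat_eval (a # replicate (\<Omega> - 1) w) z = w"
proof -
  have "1 \<le> z * real \<Omega>" using assms by (simp add: field_simps)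
  moreover have "z * real \<Omega> < real \<Omega>" using assms by simp
  have f1: "1 \<le> \<lfloor>z * real \<Omega>\<rfloor>" using \<open>1 \<le> z * real \<Omega>\<close> by (simp add: le_floor_iff)
  have f2: "\<lfloor>z * real \<Omega>\<rfloor> < int \<Omega>" using \<open>z * real \<Omega> < real \<Omega>\<close> by (simp add: floor_less_iff)
  have natk: "\<And>k::int. 1 \<le> k \<Longrightarrow> k < int \<Omega> \<Longrightarrow> 1 \<le> nat k \<and> nat k < \<Omega>" by auto
  from natk[OF f1 f2] have "1 \<le> nat \<lfloor>z * real \<Omega>\<rfloor>" "nat \<lfloor>z * real \<Omega>\<rfloor> < \<Omega>" by auto
  then show ?thesis using assms
    by (auto simp: strat_eval_def nth_Cons' split: if_splits)
qed

lemma profiles_finite: assumes "\<And>i. finite (A i)" shows "finite (profiles (A::'n::finite \<Rightarrow> 'a set))"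
proof -
  have "profiles A \<subseteq> Pi\<^sub>E UNIV A" by (auto simp: profiles_def PiE_iff)
  moreover have "finite (Pi\<^sub>E UNIV A)" by (rule finite_PiE) (auto simp: assms)
  ultimately show ?thesis by (rule finite_subset)
qed

lemma sum_delta2:
  assumes "finite P" "p \<in> P" "p' \<in> P"
  shows "(\<Sum>b\<in>P. (g b::real) * (k * ((if p = b then 1 else 0) - (if p' = b then 1 else 0)))) = k * (g p - g p')"
proof -
  have "(\<Sum>b\<in>P. g b * (k * ((if p = b then 1 else 0) - (if p' = b then 1 else 0))))
      = k * ((\<Sum>b\<in>P. if p = b then g b else 0) - (\<Sum>b\<in>P. if p' = b then g b else 0))"
  proof -
    have "\<And>b. g b * (k * ((if p = b then 1 else 0) - (if p' = b then 1 else 0)))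
        = k * (if p = b then g b else 0) - k * (if p' = b then g b else 0)" by auto
    then show ?thesis by (simp add: sum_subtractf sum_distrib_left right_diff_distrib)
  qed
  also have "\<dots> = k * (g p - g p')" using assms by (simp add: sum.delta)
  finally show ?thesis .
qed

lemma util_diff:
  fixes A :: "'n::finite \<Rightarrow> 'a set" and sb :: "'n \<Rightarrow> 'a list"
  assumes fin: "\<And>i. finite (A i)" and Om: "\<Omega> \<ge> 1"
    and sb: "\<And>k. sb k \<in> strategies A \<Omega> k"
    and aA: "\<And>j. j \<in> J \<Longrightarrow> a j \<in> A j" and aA': "\<And>j. j \<in> J \<Longrightarrow> a' j \<in> A j"
  shows "strat_util A U i (\<lambda>j. if j \<in> J then a j # replicate (\<Omega> - 1) (w j) else sb j)
       - strat_util A U i (\<lambda>j. if j \<in> J then a' j # replicate (\<Omega> - 1) (w j) else sb j)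
       = (1 / real \<Omega>) * (U i (\<lambda>j. if j \<in> J then a j else hd (sb j)) - U i (\<lambda>j. if j \<in> J then a' j else hd (sb j)))"
proof -
  define T where "T = (\<lambda>a j. if j \<in> J then a j # replicate (\<Omega> - 1) (w j) else sb j)"
  define m where "m = (\<lambda>a j. if j \<in> J then a j else hd (sb j))"
  have sbne: "sb k \<noteq> []" "length (sb k) \<le> \<Omega>" "set (sb k) \<subseteq> A k" for k
    using sb[of k] by (auto simp: strategies_def)
  have hdA: "hd (sb k) \<in> A k" for k using sbne[of k] hd_in_set by blast
  have lo: "strat_eval (T a j) z = m a j \<and> strat_eval (T a' j) z = m a' j"
    if "0 \<le> z" "z < 1 / real \<Omega>" for z j
  proof (cases "j \<in> J")
    case True
    then show ?thesis using se_lo[OF _ _ that, of "a j # replicate (\<Omega> - 1) (w j)"]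
        se_lo[OF _ _ that, of "a' j # replicate (\<Omega> - 1) (w j)"] Om
      by (simp add: T_def m_def)
  next
    case False
    then show ?thesis using se_lo[OF sbne(1,2) that] by (simp add: T_def m_def)
  qed
  have hi: "strat_eval (T a j) z = strat_eval (T a' j) z" if "1 / real \<Omega> \<le> z" "z < 1" for z j
    using se_hi[OF Om that, of "a j" "w j"] se_hi[OF Om that, of "a' j" "w j"] by (simp add: T_def)
  have q: "qprob b (T a) - qprob b (T a') = (1 / real \<Omega>) * ((if m a = b then 1 else 0) - (if m a' = b then 1 else 0))" for b
    by (rule qdiff[OF Om]) (use lo hi in auto)
  have mP: "m a \<in> profiles A" "m a' \<in> profiles A" using aA aA' hdA by (auto simp: profiles_def m_def)
  have "strat_util A U i (T a) - strat_util A U i (T a') = (\<Sum>b\<in>profiles A. U i b * (qprob b (T a) - qprob b (T a')))"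
    by (simp add: strat_util_def sum_subtractf[symmetric] algebra_simps)
  also have "\<dots> = (1 / real \<Omega>) * (U i (m a) - U i (m a'))"
    unfolding q by (rule sum_delta2[OF profiles_finite[OF fin] mP])
  finally show ?thesis by (simp add: T_def m_def)
qed

lemma strategies_finite: assumes "finite (A i)" shows "finite (strategies A \<Omega> i)"
proof -
  have "strategies A \<Omega> i \<subseteq> {xs. set xs \<subseteq> A i \<and> length xs \<le> \<Omega>}" by (auto simp: strategies_def)
  then show ?thesis using finite_lists_length_le[OF assms] finite_subset by blast
qed

lemma St_finite: assumes "\<And>i. finite (A i)" shows "finite (Pi\<^sub>E (UNIV::'n::finite set) (strategies A \<Omega>))"
  by (rule finite_PiE) (auto intro: strategies_finite assms)

lemma P0_pos:
  assumes "\<And>i. finite (A i)" "t \<in> Pi\<^sub>E UNIV (strategies A \<Omega>)"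
  shows "0 < P0 A U \<Omega> x (step0 A U x t)"
proof -
  let ?S = "Pi\<^sub>E UNIV (strategies A \<Omega>)"
  have f: "finite ?S" by (rule St_finite[OF assms(1)])
  have "t \<in> {t' \<in> ?S. step0 A U x t' = step0 A U x t}" using assms by auto
  then have "card {t' \<in> ?S. step0 A U x t' = step0 A U x t} > 0" using f by (auto simp: card_gt_0_iff)
  moreover have "card ?S > 0" using f assms(2) by (auto simp: card_gt_0_iff)
  ultimately show ?thesis by (simp add: P0_def)
qed

lemma P0_posD:
  assumes "0 < P0 A U \<Omega> x y"
  shows "\<exists>t \<in> Pi\<^sub>E UNIV (strategies A \<Omega>). step0 A U x t = y"
proof (rule ccontr)
  assume "\<not> ?thesis"
  then have e: "{t \<in> Pi\<^sub>E UNIV (strategies A \<Omega>). step0 A U x t = y} = {}" by auto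
  show False using assms unfolding P0_def e by simp
qed

lemma step0_eval: "step0 A U x t i = (if snd (x i) = Content
   then (if strat_util A U i (\<lambda>j. if snd (x j) = Content then fst (x j) else t j) \<ge> strat_util A U i (\<lambda>j. fst (x j))
         then (fst (x i), Content) else (fst (x i), Discontent))
   else (t i, Discontent))"
  by (simp add: step0_def Let_def)

lemma step_states: "x \<in> states A \<Omega> \<Longrightarrow> t \<in> Pi\<^sub>E UNIV (strategies A \<Omega>) \<Longrightarrow> step0 A U x t \<in> states A \<Omega>"
  by (auto simp: states_def step0_eval PiE_iff)

lemma acc_edge:
  assumes "\<And>i. finite (A i)" "x \<in> states A \<Omega>" "t \<in> Pi\<^sub>E UNIV (strategies A \<Omega>)"
  shows "accessible A U \<Omega> x (step0 A U x t)"
  using P0_pos[OF assms(1,3)] step_states[OF assms(2,3)] assms(2)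
  unfolding accessible_def by (intro r_into_rtrancl) auto

lemma acc_trans: "accessible A U \<Omega> x y \<Longrightarrow> accessible A U \<Omega> y z \<Longrightarrow> accessible A U \<Omega> x z"
  unfolding accessible_def by (rule rtrancl_trans)

lemma acc_closed:
  assumes "accessible A U \<Omega> x y" "x \<in> R"
    and cl: "\<And>u t. u \<in> R \<Longrightarrow> u \<in> states A \<Omega> \<Longrightarrow> t \<in> Pi\<^sub>E UNIV (strategies A \<Omega>) \<Longrightarrow> step0 A U u t \<in> R"
  shows "y \<in> R"
  using assms(1,2) unfolding accessible_def
proof (induction rule: rtrancl_induct)
  case base then show ?case .
next
  case (step y z)
  then obtain t where "t \<in> Pi\<^sub>E UNIV (strategies A \<Omega>)" "step0 A U y t = z" using P0_posD[of A U \<Omega> y z] by auto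
  then show ?case using step cl by auto
qed

lemma acc_states: "accessible A U \<Omega> x y \<Longrightarrow> x \<in> states A \<Omega> \<Longrightarrow> y \<in> states A \<Omega>"
  by (rule acc_closed) (auto intro: step_states)

lemma allC_fix: "(\<forall>i. snd (x i) = Content) \<Longrightarrow> step0 A U x t = x"
  by (auto simp: fun_eq_iff step0_eval prod_eq_iff)

lemma disc_stay: "snd (x i) = Discontent \<Longrightarrow> step0 A U x t i = (t i, Discontent)"
  by (simp add: step0_eval)

lemma strat_nonempty: assumes "A i \<noteq> {}" "\<Omega> \<ge> 1" shows "[SOME a. a \<in> A i] \<in> strategies A \<Omega> i"
  using assms some_in_eq by (auto simp: strategies_def)

lemma recC:
  assumes fin: "\<And>i. finite (A i)" and x: "x \<in> states A \<Omega>" and C: "\<forall>i. snd (x i) = Content"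
  shows "recurrent_class A U \<Omega> {x}"
proof -
  have "{y. accessible A U \<Omega> x y} = {x}"
  proof
    show "{y. accessible A U \<Omega> x y} \<subseteq> {x}"
      using acc_closed[of A U \<Omega> x _ "{x}"] allC_fix[OF C] by auto
    show "{x} \<subseteq> {y. accessible A U \<Omega> x y}" by (simp add: accessible_def)
  qed
  then show ?thesis using x by (simp add: recurrent_class_def)
qed

lemma recD:
  assumes fin: "\<And>i. finite (A i)" and ne: "\<And>i. A i \<noteq> {}" and Om: "\<Omega> \<ge> 1"
  shows "recurrent_class A U \<Omega> {x \<in> states A \<Omega>. \<forall>i. snd (x i) = Discontent}"
proof -
  let ?D = "{x \<in> states A \<Omega>. \<forall>i. snd (x i) = Discontent}"
  have "(\<lambda>i. ([SOME a. a \<in> A i], Discontent)) \<in> ?D"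
    using strat_nonempty[of A _ \<Omega>, OF ne Om] by (auto simp: states_def)
  then have "?D \<noteq> {}" by blast
  moreover have "{y. accessible A U \<Omega> x y} = ?D" if x: "x \<in> ?D" for x
  proof
    show "{y. accessible A U \<Omega> x y} \<subseteq> ?D"
    proof
      fix y assume "y \<in> {y. accessible A U \<Omega> x y}"
      then have "accessible A U \<Omega> x y" by simp
      then show "y \<in> ?D"
      proof (rule acc_closed[OF _ x])
        fix u t assume u: "u \<in> ?D" "u \<in> states A \<Omega>" and t: "t \<in> Pi\<^sub>E UNIV (strategies A \<Omega>)"
        have "snd (step0 A U u t i) = Discontent" for i using u disc_stay[of u i] by simp
        then show "step0 A U u t \<in> ?D" using step_states[OF u(2) t] by simp
      qed
    qed
    show "?D \<subseteq> {y. accessible A U \<Omega> x y}"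
    proof
      fix y assume y: "y \<in> ?D"
      define t where "t = (\<lambda>i. fst (y i))"
      have t: "t \<in> Pi\<^sub>E UNIV (strategies A \<Omega>)" using y by (auto simp: t_def states_def)
      have "step0 A U x t = y" using x y disc_stay[of x] by (auto simp: fun_eq_iff t_def prod_eq_iff)
      then show "y \<in> {y. accessible A U \<Omega> x y}" using acc_edge[OF fin _ t, of x U] x by auto
    qed
  qed
  ultimately show ?thesis by (auto simp: recurrent_class_def)
qed

lemma mood_ne: "m \<noteq> Discontent \<longleftrightarrow> m = Content" by (cases m) auto

lemma grow:
  fixes A :: "'n::finite \<Rightarrow> 'a set" and U :: "'n \<Rightarrow> ('n \<Rightarrow> 'a) \<Rightarrow> real"
  assumes fin: "\<And>i. finite (A i)" and ne: "\<And>i. A i \<noteq> {}"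
    and interdep: "interdependent A U" and Om: "\<Omega> \<ge> 1"
    and x: "x \<in> states A \<Omega>" and D: "\<exists>i. snd (x i) = Discontent" and C: "\<exists>i. snd (x i) = Content"
  shows "\<exists>y. accessible A U \<Omega> x y \<and> {i. snd (x i) = Discontent} \<subset> {i. snd (y i) = Discontent}"
proof -
  define J where "J = {i. snd (x i) = Discontent}"
  define sb where "sb = (\<lambda>k. fst (x k))"
  have sbS: "\<And>k. sb k \<in> strategies A \<Omega> k" using x by (auto simp: sb_def states_def)
  define w where "w = (\<lambda>j. SOME a. a \<in> A j)"
  have wA: "w j \<in> A j" for j using ne[of j] by (simp add: w_def some_in_eq)
  define T where "T = (\<lambda>a j. if j \<in> J then a j # replicate (\<Omega> - 1) (w j) else sb j)"
  define c where "c = (\<lambda>k. hd (sb k))"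
  have cA: "c k \<in> A k" for k
  proof -
    have "sb k \<noteq> []" "set (sb k) \<subseteq> A k" using sbS[of k] by (auto simp: strategies_def)
    then show ?thesis using hd_in_set[of "sb k"] by (auto simp: c_def)
  qed
  have cP: "c \<in> profiles A" using cA by (simp add: profiles_def)
  have Tv: "T a \<in> Pi\<^sub>E UNIV (strategies A \<Omega>)" if "\<And>j. j \<in> J \<Longrightarrow> a j \<in> A j" for a
    using that sbS wA Om by (auto simp: T_def PiE_iff strategies_def)
  obtain i0 where "snd (x i0) = Discontent" using D by blast
  then have "i0 \<in> J" by (simp add: J_def)
  obtain i1 where "snd (x i1) = Content" using C by blast
  then have "i1 \<notin> J" by (simp add: J_def)
  have Jne: "J \<noteq> {} \<and> J \<noteq> UNIV" using \<open>i0 \<in> J\<close> \<open>i1 \<notin> J\<close> by blast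
  obtain i a' where i: "i \<notin> J" and a'A: "\<And>j. j \<in> J \<Longrightarrow> a' j \<in> A j"
    and neq: "U i (\<lambda>j. if j \<in> J then a' j else c j) \<noteq> U i c"
  proof -
    have "\<exists>i. i \<notin> J \<and> (\<exists>a'. (\<forall>j\<in>J. a' j \<in> A j) \<and>
            U i (\<lambda>j. if j \<in> J then a' j else c j) \<noteq> U i c)"
      using interdep cP Jne unfolding interdependent_def by blast
    then show ?thesis using that by blast
  qed
  have mc: "(\<lambda>j. if j \<in> J then c j else hd (sb j)) = c" by (auto simp: c_def)
  have ma: "(\<lambda>j. if j \<in> J then a' j else hd (sb j)) = (\<lambda>j. if j \<in> J then a' j else c j)" unfolding c_def by (rule refl)
  have ud0: "strat_util A U i (T a') - strat_util A U i (T c)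
      = (1 / real \<Omega>) * (U i (\<lambda>j. if j \<in> J then a' j else hd (sb j)) - U i (\<lambda>j. if j \<in> J then c j else hd (sb j)))"
    unfolding T_def by (rule util_diff[OF fin Om sbS]) (auto intro: a'A cA)
  have ud: "strat_util A U i (T a') - strat_util A U i (T c)
      = (1 / real \<Omega>) * (U i (\<lambda>j. if j \<in> J then a' j else c j) - U i c)"
    using ud0 unfolding ma mc .
  have "strat_util A U i (T a') \<noteq> strat_util A U i (T c)"
  proof
    assume "strat_util A U i (T a') = strat_util A U i (T c)"
    then have "(1 / real \<Omega>) * (U i (\<lambda>j. if j \<in> J then a' j else c j) - U i c) = 0" using ud by simp
    then show False using neq Om by simp
  qed
  then obtain lo hi where loA: "\<And>j. j \<in> J \<Longrightarrow> lo j \<in> A j" and hiA: "\<And>j. j \<in> J \<Longrightarrow> hi j \<in> A j"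
    and lt: "strat_util A U i (T lo) < strat_util A U i (T hi)"
    using a'A cA by (metis linorder_neqE_linordered_idom)
  have sa: "(\<lambda>j. if snd (x j) = Content then fst (x j) else T a j) = T a" for a
    by (auto simp: fun_eq_iff T_def J_def sb_def mood_ne[symmetric])
  define y1 where "y1 = step0 A U x (T hi)"
  have acc1: "accessible A U \<Omega> x y1" unfolding y1_def by (rule acc_edge[OF fin x Tv[OF hiA]])
  have y1S: "y1 \<in> states A \<Omega>" unfolding y1_def by (rule step_states[OF x Tv[OF hiA]])
  have Jy1: "J \<subseteq> {k. snd (y1 k) = Discontent}" by (auto simp: J_def y1_def disc_stay)
  show ?thesis
  proof (cases "\<exists>k. snd (x k) = Content \<and> snd (y1 k) = Discontent")
    case True
    then obtain k where "snd (x k) = Content" "snd (y1 k) = Discontent" by blast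
    then have "k \<in> {i. snd (y1 i) = Discontent}" "k \<notin> J" by (auto simp: J_def)
    then have "J \<subset> {i. snd (y1 i) = Discontent}" using Jy1 by blast
    then show ?thesis using acc1 unfolding J_def by blast
  next
    case False
    have sn: "snd (y1 k) = snd (x k)" for k
    proof (cases "snd (x k)")
      case Content
      then have "snd (y1 k) \<noteq> Discontent" using False by blast
      then show ?thesis using Content by (cases "snd (y1 k)") auto
    next
      case Discontent
      then show ?thesis by (simp add: y1_def disc_stay)
    qed
    have fs: "fst (y1 k) = T hi k" for k
      by (cases "snd (x k)") (auto simp: y1_def step0_eval disc_stay T_def J_def sb_def)
    have sb1: "(\<lambda>j. fst (y1 j)) = T hi" using fs by auto
    have sa1: "(\<lambda>j. if snd (y1 j) = Content then fst (y1 j) else T lo j) = T lo"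
      using sa[of lo] by (simp add: sn fs T_def J_def fun_eq_iff)
    define y2 where "y2 = step0 A U y1 (T lo)"
    have acc2: "accessible A U \<Omega> x y2" unfolding y2_def
      by (rule acc_trans[OF acc1 acc_edge[OF fin y1S Tv[OF loA]]])
    have iC: "snd (y1 i) = Content" using i sn[of i] by (simp add: J_def mood_ne[symmetric])
    have "snd (y2 i) = Discontent"
      using lt iC unfolding y2_def step0_eval[of A U y1 "T lo" i] sa1 sb1 by simp
    moreover have "J \<subseteq> {k. snd (y2 k) = Discontent}"
      using Jy1 by (auto simp: y2_def disc_stay)
    ultimately have "J \<subset> {k. snd (y2 k) = Discontent}" using i by blast
    then show ?thesis using acc2 unfolding J_def by blast
  qed
qed

lemma reachD:
  fixes A :: "'n::finite \<Rightarrow> 'a set" and U :: "'n \<Rightarrow> ('n \<Rightarrow> 'a) \<Rightarrow> real"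
  assumes fin: "\<And>i. finite (A i)" and ne: "\<And>i. A i \<noteq> {}"
    and interdep: "interdependent A U" and Om: "\<Omega> \<ge> 1"
  shows "x \<in> states A \<Omega> \<Longrightarrow> (\<exists>i. snd (x i) = Discontent) \<Longrightarrow>
     \<exists>d. accessible A U \<Omega> x d \<and> (\<forall>i. snd (d i) = Discontent)"
proof (induction "card {i. snd (x i) = Content}" arbitrary: x rule: less_induct)
  case (less x)
  show ?case
  proof (cases "\<exists>i. snd (x i) = Content")
    case False
    then have "\<forall>i. snd (x i) = Discontent" by (metis mood_ne)
    then show ?thesis by (intro exI[of _ x]) (simp add: accessible_def)
  next
    case True
    obtain y where y: "accessible A U \<Omega> x y"
      and sub: "{i. snd (x i) = Discontent} \<subset> {i. snd (y i) = Discontent}"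
      using grow[OF fin ne interdep Om less.prems True] by blast
    have yS: "y \<in> states A \<Omega>" using acc_states[OF y less.prems(1)] .
    have "{i. snd (y i) = Content} \<subset> {i. snd (x i) = Content}"
      using sub by (auto simp: mood_ne[symmetric])
    then have lt: "card {i. snd (y i) = Content} < card {i. snd (x i) = Content}"
      by (rule psubset_card_mono[OF finite])
    have "\<exists>i. snd (y i) = Discontent" using sub less.prems(2) by blast
    then obtain d where "accessible A U \<Omega> y d" "\<forall>i. snd (d i) = Discontent"
      using less.hyps[OF lt yS] by blast
    then show ?thesis using acc_trans[OF y] by blast
  qed
qed

theorem lemma1:
  fixes A :: "'n::finite \<Rightarrow> 'a set"
    and U :: "'n \<Rightarrow> ('n \<Rightarrow> 'a) \<Rightarrow> real"
    and \<Omega> :: nat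
  assumes fin: "\<And>i. finite (A i)"
    and nonempty: "\<And>i. A i \<noteq> {}"
    and util_range: "\<And>i a. a \<in> profiles A \<Longrightarrow> 0 \<le> U i a \<and> U i a \<le> 1"
    and interdep: "interdependent A U"
    and Omega: "\<Omega> \<ge> 1"
  shows "(\<forall>x \<in> states A \<Omega>.
            (\<exists>R. recurrent_class A U \<Omega> R \<and> x \<in> R) \<longleftrightarrow>
            ((\<forall>i. snd (x i) = Content) \<or> (\<forall>i. snd (x i) = Discontent)))
       \<and> (\<forall>x \<in> states A \<Omega>. (\<forall>i. snd (x i) = Content) \<longrightarrow> recurrent_class A U \<Omega> {x})
       \<and> recurrent_class A U \<Omega> {x \<in> states A \<Omega>. \<forall>i. snd (x i) = Discontent}"
proof -
  let ?D = "{x \<in> states A \<Omega>. \<forall>i. snd (x i) = Discontent}"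
  have rD: "recurrent_class A U \<Omega> ?D" by (rule recD[OF fin nonempty Omega])
  have rC: "\<forall>x \<in> states A \<Omega>. (\<forall>i. snd (x i) = Content) \<longrightarrow> recurrent_class A U \<Omega> {x}"
    using recC[of A _ \<Omega> U, OF fin] by blast
  have iff: "(\<exists>R. recurrent_class A U \<Omega> R \<and> x \<in> R) \<longleftrightarrow>
            ((\<forall>i. snd (x i) = Content) \<or> (\<forall>i. snd (x i) = Discontent))" if x: "x \<in> states A \<Omega>" for x
  proof
    assume "\<exists>R. recurrent_class A U \<Omega> R \<and> x \<in> R"
    then obtain R where R: "recurrent_class A U \<Omega> R" "x \<in> R" by blast
    show "(\<forall>i. snd (x i) = Content) \<or> (\<forall>i. snd (x i) = Discontent)"
    proof (rule ccontr)
      assume "\<not> ?thesis"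
      then obtain i0 i1 where i0: "snd (x i0) \<noteq> Content" and i1: "snd (x i1) \<noteq> Discontent" by blast
      have "\<exists>i. snd (x i) = Discontent" using i0 mood_ne by metis
      then obtain d where d: "accessible A U \<Omega> x d" "\<forall>i. snd (d i) = Discontent"
        using reachD[OF fin nonempty interdep Omega x] by blast
      have Rx: "R = {y. accessible A U \<Omega> x y}" using R by (simp add: recurrent_class_def)
      have "d \<in> R" using Rx d(1) by simp
      have dS: "d \<in> states A \<Omega>" using acc_states[OF d(1) x] .
      then have "d \<in> ?D" using d(2) by simp
      have Rd: "R = {y. accessible A U \<Omega> d y}" using R \<open>d \<in> R\<close> by (simp add: recurrent_class_def)
      have "{y. accessible A U \<Omega> d y} = ?D" using rD \<open>d \<in> ?D\<close> by (simp add: recurrent_class_def)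
      then have "x \<in> ?D" using Rd R(2) by simp
      then show False using i1 by simp
    qed
  next
    assume "(\<forall>i. snd (x i) = Content) \<or> (\<forall>i. snd (x i) = Discontent)"
    then show "\<exists>R. recurrent_class A U \<Omega> R \<and> x \<in> R"
    proof
      assume "\<forall>i. snd (x i) = Content"
      then show ?thesis using rC x by blast
    next
      assume "\<forall>i. snd (x i) = Discontent"
      then show ?thesis using rD x by blast
    qed
  qed
  show ?thesis using iff rC rD by blast
qed
end
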